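(* Fix $\alpha\in(1/2,1)$. Then for every $n\ge 0$ and every binary rooted tree $T$ on $n$ nodes, the tree $B_n$ defined below contains a subgraph isomorphic to a subdivision of $T$. Equivalently, there is an injective map $f$ from the nodes of $T$ to the nodes of $B_n$ with $f(\mathsf{NCA}(u,v))=\mathsf{NCA}(f(u),f(v))$ for all $u,v$. Definition of $a_N$: for integers $N\ge 0$, $a_0$ is the empty sequence, $a_1=(1)$, and for $N\ge 2$, $a_N=a_{\lfloor N/2\rfloor}\oplus(N)\oplus a_{\lfloor N/2\rfloor}$, where $\oplus$ denotes concatenation. Definition of $B_n$: $B_0$ is the empty tree and $B_1$ is a single node. For $n\ge 2$, let $N=\lfloor(1-\alpha)n\rfloor$ and $a_N=(a(1),\dots,a(k))$. Then $B_n$ consists of a path $u_1-u_2-\dots-u_{k+1}$ rooted at $u_1$, with the following subtrees attached: - for each $i=1,\dots,k$, a copy of $B_{a(i)-1}$ attached to $u_i$; - a copy of $B_{\lfloor\alpha n\rfloor}$ attached to $u_{k+1}$; - a copy of $B_{\lfloor (n-1)/2\rfloor}$ attached to $u_{k+1}$. Attaching a copy of a tree to a node means making its root a child of that node; attaching the empty tree adds nothing.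
   Context: Trees are rooted and unordered, with edges directed from parent to child. A tree is binary if every node has at most two children. $\mathsf{NCA}$ denotes the nearest common ancestor. *)

theory Defs
  imports Complex_Main "HOL-Library.Sublist"
begin

text \<open>A rooted (unordered) tree is encoded by its set of nodes, each node being the
  position (list of child indices) reached from the root.  The root is the empty list,
  the children of node p are the nodes of the form p @ [i], and the set is closed
  under taking parents.\<close>

definition is_tree :: "nat list set \<Rightarrow> bool" where
  "is_tree T \<longleftrightarrow> finite T \<and> (\<forall>p i. p @ [i] \<in> T \<longrightarrow> p \<in> T)"

definition children :: "nat list set \<Rightarrow> nat list \<Rightarrow> nat list set" where
  "children T p = {q \<in> T. \<exists>i. q = p @ [i]}"

definition is_binary_tree :: "nat list set \<Rightarrow> bool" where
  "is_binary_tree T \<longleftrightarrow> is_tree T \<and> (\<forall>p\<in>T. card (children T p) \<le> 2)"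

text \<open>Ancestors of a node are exactly its prefixes, so the nearest common ancestor
  of two nodes is their longest common prefix.\<close>

definition nca :: "nat list \<Rightarrow> nat list \<Rightarrow> nat list" where
  "nca u v = longest_common_prefix u v"

function aseq :: "nat \<Rightarrow> nat list" where
  "aseq 0 = []"
| "aseq (Suc 0) = [1]"
| "aseq (Suc (Suc m)) =
     aseq (Suc (Suc m) div 2) @ [Suc (Suc m)] @ aseq (Suc (Suc m) div 2)"
  by pat_completeness auto
termination by (relation "measure id") auto

text \<open>Path u_1,...,u_{k+1} is [], [0], [0,0], ...; the copy of B_{a(i)-1} hangs at
  child index 1 of u_i; at u_{k+1} the copies of B_{floor(alpha n)} and
  B_{floor((n-1)/2)} hang at child indices 1 and 2.  Recursive calls are guarded by
  m < n, which always holds for alpha < 1 (so the guard never fires there).\<close>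

function Btree :: "real \<Rightarrow> nat \<Rightarrow> nat list set" where
  "Btree \<alpha> n =
    (if n = 0 then {}
     else if n = 1 then {[]}
     else
       (let N = nat \<lfloor>(1 - \<alpha>) * real n\<rfloor>;
            as = aseq N;
            k = length as;
            B = (\<lambda>m. if m < n then Btree \<alpha> m else {})
        in {replicate i 0 | i. i \<le> k}
           \<union> (\<Union>i<k. (\<lambda>q. replicate i 0 @ 1 # q) ` B (as ! i - 1))
           \<union> (\<lambda>q. replicate k 0 @ 1 # q) ` B (nat \<lfloor>\<alpha> * real n\<rfloor>)
           \<union> (\<lambda>q. replicate k 0 @ 2 # q) ` B ((n - 1) div 2)))"
  by pat_completeness auto
termination by (relation "measure (\<lambda>(\<alpha>, n). n)") auto

end

theory Submission
  imports Defs
begin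

lemma nca_append: "nca (p @ x) (p @ y) = p @ nca x y"
  unfolding nca_def by (induction p) auto

lemma nca_Cons_diff: "a \<noteq> b \<Longrightarrow> nca (a # x) (b # y) = []"
  unfolding nca_def by auto

lemma nca_Cons_same: "nca (a # x) (a # y) = a # nca x y"
  unfolding nca_def by auto

lemma nca_same: "nca x x = x"
  unfolding nca_def by (induction x) auto

lemma nca_Nil1: "nca [] y = []"
  unfolding nca_def by auto

lemma nca_Nil2: "nca x [] = []"
  unfolding nca_def by (cases x) auto

definition sub :: "nat list set \<Rightarrow> nat list \<Rightarrow> nat list set" where
  "sub T p = {q. p @ q \<in> T}"

definition emb :: "nat list set \<Rightarrow> nat list set \<Rightarrow> (nat list \<Rightarrow> nat list) \<Rightarrow> bool" where
  "emb T S f \<longleftrightarrow> inj_on f T \<and> f ` T \<subseteq> S \<and> (\<forall>u\<in>T. \<forall>v\<in>T. f (nca u v) = nca (f u) (f v))"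

definition embeds :: "nat list set \<Rightarrow> nat list set \<Rightarrow> bool" where
  "embeds T S \<longleftrightarrow> (\<exists>f. emb T S f)"

lemma embeds_empty: "embeds {} S"
  unfolding embeds_def emb_def by auto

lemma embeds_mono: "embeds T S \<Longrightarrow> S \<subseteq> S' \<Longrightarrow> embeds T S'"
  unfolding embeds_def emb_def by blast

lemma sub_sub: "sub (sub S p) q = sub S (p @ q)"
  unfolding sub_def by auto

lemma sub_Nil: "sub S [] = S"
  unfolding sub_def by auto

lemma embeds_lift: "embeds T (sub S p) \<Longrightarrow> embeds T S"
proof -
  assume "embeds T (sub S p)"
  then obtain f where f: "emb T (sub S p) f" unfolding embeds_def by blast
  have "emb T S (\<lambda>q. p @ f q)"
    using f unfolding emb_def sub_def inj_on_def by (auto simp: nca_append)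
  then show ?thesis unfolding embeds_def by blast
qed

lemma embeds_glue:
  assumes T: "[] \<in> T" and c: "c1 \<noteq> c2" "\<And>c q. c # q \<in> T \<Longrightarrow> c = c1 \<or> c = c2"
    and d: "d1 \<noteq> d2" and r: "r \<in> S"
    and e1: "embeds (sub T [c1]) (sub S (r @ [d1]))"
    and e2: "embeds (sub T [c2]) (sub S (r @ [d2]))"
  shows "embeds T S"
proof -
  obtain g1 where g1: "emb (sub T [c1]) (sub S (r @ [d1])) g1" using e1 unfolding embeds_def by blast
  obtain g2 where g2: "emb (sub T [c2]) (sub S (r @ [d2])) g2" using e2 unfolding embeds_def by blast
  define f where "f u = (case u of [] \<Rightarrow> r | c # q \<Rightarrow> (if c = c1 then r @ d1 # g1 q else r @ d2 # g2 q))" for u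
  have f0: "f [] = r" and f1: "f (c1 # q) = r @ d1 # g1 q" and f2: "f (c2 # q) = r @ d2 # g2 q" for q
    using c(1) by (auto simp: f_def)
  have s1: "c1 # q \<in> T \<Longrightarrow> q \<in> sub T [c1]" and s2: "c2 # q \<in> T \<Longrightarrow> q \<in> sub T [c2]" for q
    by (auto simp: sub_def)
  have cs: "u = [] \<or> (\<exists>q. u = c1 # q \<and> q \<in> sub T [c1]) \<or> (\<exists>q. u = c2 # q \<and> q \<in> sub T [c2])"
    if "u \<in> T" for u
  proof (cases u)
    case (Cons a q)
    then show ?thesis using c(2) that s1 s2 by blast
  qed simp
  have gi1: "inj_on g1 (sub T [c1])" and gs1: "g1 ` sub T [c1] \<subseteq> sub S (r @ [d1])"
    and gn1: "\<forall>u\<in>sub T [c1]. \<forall>v\<in>sub T [c1]. g1 (nca u v) = nca (g1 u) (g1 v)"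
    using g1 unfolding emb_def by auto
  have gi2: "inj_on g2 (sub T [c2])" and gs2: "g2 ` sub T [c2] \<subseteq> sub S (r @ [d2])"
    and gn2: "\<forall>u\<in>sub T [c2]. \<forall>v\<in>sub T [c2]. g2 (nca u v) = nca (g2 u) (g2 v)"
    using g2 unfolding emb_def by auto
  have inj: "inj_on f T"
  proof (rule inj_onI)
    fix u v assume u: "u \<in> T" and v: "v \<in> T" and eq: "f u = f v"
    from cs[OF u] show "u = v"
    proof (elim disjE exE conjE)
      assume "u = []"
      from cs[OF v] show ?thesis
      proof (elim disjE exE conjE)
        fix q assume "v = c1 # q" then show ?thesis using eq \<open>u = []\<close> f0 f1 by simp
      next
        fix q assume "v = c2 # q" then show ?thesis using eq \<open>u = []\<close> f0 f2 by simp
      qed (simp add: \<open>u = []\<close>)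
    next
      fix q assume uq: "u = c1 # q" "q \<in> sub T [c1]"
      from cs[OF v] show ?thesis
      proof (elim disjE exE conjE)
        assume "v = []" then show ?thesis using eq uq f0 f1 by simp
      next
        fix q' assume "v = c1 # q'" "q' \<in> sub T [c1]" then show ?thesis using eq uq f1 gi1 by (simp add: inj_on_def)
      next
        fix q' assume "v = c2 # q'" then show ?thesis using eq uq f1 f2 d by simp
      qed
    next
      fix q assume uq: "u = c2 # q" "q \<in> sub T [c2]"
      from cs[OF v] show ?thesis
      proof (elim disjE exE conjE)
        assume "v = []" then show ?thesis using eq uq f0 f2 by simp
      next
        fix q' assume "v = c2 # q'" "q' \<in> sub T [c2]" then show ?thesis using eq uq f2 gi2 by (simp add: inj_on_def)
      next
        fix q' assume "v = c1 # q'" then show ?thesis using eq uq f1 f2 d by simp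
      qed
    qed
  qed
  have img: "f ` T \<subseteq> S"
  proof
    fix x assume "x \<in> f ` T"
    then obtain u where u: "u \<in> T" "x = f u" by blast
    from cs[OF u(1)] show "x \<in> S"
    proof (elim disjE exE conjE)
      assume "u = []" then show ?thesis using u r f0 by simp
    next
      fix q assume "u = c1 # q" "q \<in> sub T [c1]"
      then show ?thesis using u f1 gs1 unfolding sub_def by auto
    next
      fix q assume "u = c2 # q" "q \<in> sub T [c2]"
      then show ?thesis using u f2 gs2 unfolding sub_def by auto
    qed
  qed
  have nca: "f (nca u v) = nca (f u) (f v)" if u: "u \<in> T" and v: "v \<in> T" for u v
  proof -
    have A: "nca r (r @ x) = r" for x using nca_append[of r "[]" x] by (simp add: nca_Nil1)
    have B: "nca (r @ x) r = r" for x using nca_append[of r x "[]"] by (simp add: nca_Nil2)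
    have C: "nca (r @ d1 # x) (r @ d2 # y) = r" for x y using nca_append[of r] d by (simp add: nca_Cons_diff)
    have D: "nca (r @ d2 # x) (r @ d1 # y) = r" for x y using nca_append[of r] d by (simp add: nca_Cons_diff)
    from cs[OF u] show ?thesis
    proof (elim disjE exE conjE)
      assume "u = []"
      from cs[OF v] show ?thesis
      proof (elim disjE exE conjE)
        fix q assume "v = c1 # q" then show ?thesis using \<open>u = []\<close> f0 f1 A by (simp add: nca_Nil1)
      next
        fix q assume "v = c2 # q" then show ?thesis using \<open>u = []\<close> f0 f2 A by (simp add: nca_Nil1)
      qed (simp add: \<open>u = []\<close> nca_Nil1 f0 nca_same)
    next
      fix q assume uq: "u = c1 # q" "q \<in> sub T [c1]"
      from cs[OF v] show ?thesis
      proof (elim disjE exE conjE)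
        assume "v = []" then show ?thesis using uq f0 f1 B by (simp add: nca_Nil2)
      next
        fix q' assume "v = c1 # q'" "q' \<in> sub T [c1]" then show ?thesis using uq f1 gn1
          by (simp add: nca_Cons_same nca_append)
      next
        fix q' assume "v = c2 # q'" then show ?thesis using uq f1 f2 f0 C c(1) by (simp add: nca_Cons_diff)
      qed
    next
      fix q assume uq: "u = c2 # q" "q \<in> sub T [c2]"
      from cs[OF v] show ?thesis
      proof (elim disjE exE conjE)
        assume "v = []" then show ?thesis using uq f0 f2 B by (simp add: nca_Nil2)
      next
        fix q' assume "v = c2 # q'" "q' \<in> sub T [c2]" then show ?thesis using uq f2 gn2
          by (simp add: nca_Cons_same nca_append)
      next
        fix q' assume "v = c1 # q'" then show ?thesis using uq f1 f2 f0 D c(1) by (simp add: nca_Cons_diff)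
      qed
    qed
  qed
  have "emb T S f" unfolding emb_def using inj img nca by blast
  then show ?thesis unfolding embeds_def by blast
qed

lemma tree_prefix: "is_tree T \<Longrightarrow> p @ q \<in> T \<Longrightarrow> p \<in> T"
proof (induction q rule: rev_induct)
  case (snoc x xs)
  then show ?case unfolding is_tree_def by (metis append_assoc)
qed simp

lemma finite_sub: "finite T \<Longrightarrow> finite (sub T [c])"
proof -
  assume "finite T"
  moreover have "Cons c ` sub T [c] \<subseteq> T" by (auto simp: sub_def)
  ultimately have "finite (Cons c ` sub T [c])" by (rule rev_finite_subset)
  then show ?thesis by (rule finite_imageD) (auto simp: inj_on_def)
qed

lemma sub_binary: "is_binary_tree T \<Longrightarrow> is_binary_tree (sub T [c])"
proof -
  assume bt: "is_binary_tree T"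
  then have t: "is_tree T" unfolding is_binary_tree_def by auto
  have "is_tree (sub T [c])" using t finite_sub unfolding is_tree_def sub_def by force
  moreover have "card (children (sub T [c]) p) \<le> 2" if "p \<in> sub T [c]" for p
  proof -
    have "Cons c ` children (sub T [c]) p = children T (c # p)"
      by (auto simp: children_def sub_def)
    moreover have "inj_on (Cons c) (children (sub T [c]) p)" by (auto simp: inj_on_def)
    ultimately have "card (children (sub T [c]) p) = card (children T (c # p))"
      by (metis card_image)
    moreover have "c # p \<in> T" using that by (simp add: sub_def)
    ultimately show ?thesis using bt unfolding is_binary_tree_def by auto
  qed
  ultimately show ?thesis unfolding is_binary_tree_def by auto
qed

lemma card_le2_pair: "finite C \<Longrightarrow> card C \<le> (2::nat) \<Longrightarrow> \<exists>c1 c2. c1 \<noteq> c2 \<and> C \<subseteq> {c1, c2::nat}"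
proof -
  assume f: "finite C" and c: "card C \<le> 2"
  then have "card C = 0 \<or> card C = 1 \<or> card C = 2" by linarith
  then show ?thesis
  proof (elim disjE)
    assume "card C = 0" then have "C = {}" using f by simp
    then show ?thesis by (intro exI[of _ 0] exI[of _ 1]) auto
  next
    assume "card C = 1" then obtain a where "C = {a}" by (auto simp: card_Suc_eq)
    then show ?thesis by (intro exI[of _ a] exI[of _ "Suc a"]) auto
  next
    assume "card C = 2" then obtain a b where "C = {a, b}" "a \<noteq> b" by (meson card_2_iff)
    then show ?thesis by blast
  qed
qed

lemma decomp:
  assumes bt: "is_binary_tree T" and ne: "T \<noteq> {}"
  shows "\<exists>c1 c2. c1 \<noteq> c2 \<and> [] \<in> T \<and> (\<forall>c q. c # q \<in> T \<longrightarrow> c = c1 \<or> c = c2) \<and>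
     card T = Suc (card (sub T [c1]) + card (sub T [c2])) \<and> card (sub T [c2]) \<le> card (sub T [c1])"
proof -
  have t: "is_tree T" and fT: "finite T" using bt unfolding is_binary_tree_def is_tree_def by auto
  obtain x where "x \<in> T" using ne by blast
  then have root: "[] \<in> T" using tree_prefix[OF t, of "[]" x] by simp
  define C where "C = {c. [c] \<in> T}"
  have im: "(\<lambda>c. [c]) ` C = children T []" by (auto simp: children_def C_def)
  have inj: "inj_on (\<lambda>c. [c]) C" by (auto simp: inj_on_def)
  have "finite (children T [])" using fT by (auto simp: children_def)
  then have fC: "finite C" using im inj by (metis finite_imageD)
  have "card C \<le> 2" using im inj bt root unfolding is_binary_tree_def by (metis card_image)
  then obtain c1 c2 where c12: "c1 \<noteq> c2" "C \<subseteq> {c1, c2}" using card_le2_pair fC by blast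
  have ch: "c = c1 \<or> c = c2" if "c # q \<in> T" for c q
  proof -
    have "[c] \<in> T" using tree_prefix[OF t, of "[c]" q] that by simp
    then show ?thesis using c12 by (auto simp: C_def)
  qed
  have Teq: "T = insert [] (Cons c1 ` sub T [c1] \<union> Cons c2 ` sub T [c2])"
  proof
    show "T \<subseteq> insert [] (Cons c1 ` sub T [c1] \<union> Cons c2 ` sub T [c2])"
    proof
      fix u assume u: "u \<in> T"
      show "u \<in> insert [] (Cons c1 ` sub T [c1] \<union> Cons c2 ` sub T [c2])"
      proof (cases u)
        case (Cons a q)
        then show ?thesis using ch[of a q] u by (auto simp: sub_def)
      qed simp
    qed
  qed (auto simp: sub_def root)
  have f1: "finite (sub T [c1])" and f2: "finite (sub T [c2])" using finite_sub fT by auto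
  have "card T = card (insert [] (Cons c1 ` sub T [c1] \<union> Cons c2 ` sub T [c2]))"
    by (rule arg_cong[OF Teq])
  also have "\<dots> = Suc (card (Cons c1 ` sub T [c1] \<union> Cons c2 ` sub T [c2]))"
    using f1 f2 by (intro card_insert_disjoint) auto
  also have "card (Cons c1 ` sub T [c1] \<union> Cons c2 ` sub T [c2]) = card (Cons c1 ` sub T [c1]) + card (Cons c2 ` sub T [c2])"
    using f1 f2 c12(1) by (intro card_Un_disjoint) auto
  also have "card (Cons c1 ` sub T [c1]) = card (sub T [c1])" by (rule card_image) (auto simp: inj_on_def)
  also have "card (Cons c2 ` sub T [c2]) = card (sub T [c2])" by (rule card_image) (auto simp: inj_on_def)
  finally have cardT: "card T = Suc (card (sub T [c1]) + card (sub T [c2]))" .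
  show ?thesis
  proof (cases "card (sub T [c2]) \<le> card (sub T [c1])")
    case True then show ?thesis using c12 root ch cardT by blast
  next
    case False then show ?thesis using c12 root ch cardT
      by (intro exI[of _ c2] exI[of _ c1]) auto
  qed
qed

inductive fits :: "nat list \<Rightarrow> nat \<Rightarrow> bool" where
  "(\<And>b. 1 \<le> b \<Longrightarrow> b \<le> s \<Longrightarrow> \<exists>i<length L. b \<le> L ! i \<and> fits (drop (Suc i) L) (s - b)) \<Longrightarrow> fits L s"

lemma fits_Nil: "fits L 0"
  by (rule fits.intros) auto

lemma fits_mono: "fits L s \<Longrightarrow> s' \<le> s \<Longrightarrow> fits L s'"
proof (induction arbitrary: s' rule: fits.induct)
  case (1 s L)
  show ?case
  proof (rule fits.intros)
    fix b assume "1 \<le> b" "b \<le> s'"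
    then obtain i where "i < length L" "b \<le> L ! i" "fits (drop (Suc i) L) (s - b) \<and> (\<forall>x. x \<le> s - b \<longrightarrow> fits (drop (Suc i) L) x)"
      using 1 by force
    then show "\<exists>i<length L. b \<le> L ! i \<and> fits (drop (Suc i) L) (s' - b)"
      using 1(2) by (intro exI[of _ i]) auto
  qed
qed

lemma fits_concat: "fits A x \<Longrightarrow> fits C y \<Longrightarrow> s \<le> M \<Longrightarrow> s \<le> x + 1 + y \<Longrightarrow> fits (A @ M # C) s"
proof (induction A x arbitrary: s rule: fits.induct)
  case (1 x A)
  show ?case
  proof (rule fits.intros)
    fix b assume b: "1 \<le> b" "b \<le> s"
    show "\<exists>i<length (A @ M # C). b \<le> (A @ M # C) ! i \<and> fits (drop (Suc i) (A @ M # C)) (s - b)"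
    proof (cases "b \<le> x")
      case True
      then obtain i where i: "i < length A" "b \<le> A ! i"
        "\<And>s'. fits C y \<Longrightarrow> s' \<le> M \<Longrightarrow> s' \<le> x - b + 1 + y \<Longrightarrow> fits (drop (Suc i) A @ M # C) s'"
        using 1(1)[of b] b by blast
      have "fits (drop (Suc i) A @ M # C) (s - b)" using i(3) 1 b True by simp
      then show ?thesis using i(1,2) by (intro exI[of _ i]) (auto simp: nth_append)
    next
      case False
      have "fits C (s - b)" using fits_mono[OF 1(2)] 1(4) False by simp
      then show ?thesis using 1(3) b by (intro exI[of _ "length A"]) auto
    qed
  qed
qed

lemma aseq_rec: "N \<ge> 1 \<Longrightarrow> aseq N = aseq (N div 2) @ N # aseq (N div 2)"
proof -
  assume "N \<ge> 1"
  then consider "N = 1" | m where "N = Suc (Suc m)" by (metis One_nat_def Suc_le_D not0_implies_Suc le_antisym le_zero_eq not_less_eq_eq)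
  then show ?thesis by cases auto
qed

lemma aseq_fits: "fits (aseq N) N"
proof (induction N rule: less_induct)
  case (less N)
  show ?case
  proof (cases "N = 0")
    case True then show ?thesis by (simp add: fits_Nil)
  next
    case False
    then have "fits (aseq (N div 2)) (N div 2)" using less by simp
    then have "fits (aseq (N div 2) @ N # aseq (N div 2)) N" using fits_concat by auto
    then show ?thesis using aseq_rec False by simp
  qed
qed

lemma aseq_set: "x \<in> set (aseq N) \<Longrightarrow> 1 \<le> x \<and> x \<le> N"
proof (induction N rule: less_induct)
  case (less N)
  show ?case
  proof (cases "N = 0")
    case True then show ?thesis using less by simp
  next
    case False
    then have "x \<in> set (aseq (N div 2)) \<or> x = N" using less.prems aseq_rec[of N] by auto
    then show ?thesis using less.IH[of "N div 2"] False by auto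
  qed
qed

lemma Btree_unfold:
  assumes "2 \<le> n"
  shows "Btree \<alpha> n =
      {replicate i 0 | i. i \<le> length (aseq (nat \<lfloor>(1 - \<alpha>) * real n\<rfloor>))}
      \<union> (\<Union>i<length (aseq (nat \<lfloor>(1 - \<alpha>) * real n\<rfloor>)). (\<lambda>q. replicate i 0 @ 1 # q) `
            (if aseq (nat \<lfloor>(1 - \<alpha>) * real n\<rfloor>) ! i - 1 < n then Btree \<alpha> (aseq (nat \<lfloor>(1 - \<alpha>) * real n\<rfloor>) ! i - 1) else {}))
      \<union> (\<lambda>q. replicate (length (aseq (nat \<lfloor>(1 - \<alpha>) * real n\<rfloor>))) 0 @ 1 # q) `
            (if nat \<lfloor>\<alpha> * real n\<rfloor> < n then Btree \<alpha> (nat \<lfloor>\<alpha> * real n\<rfloor>) else {})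
      \<union> (\<lambda>q. replicate (length (aseq (nat \<lfloor>(1 - \<alpha>) * real n\<rfloor>))) 0 @ 2 # q) `
            (if (n - 1) div 2 < n then Btree \<alpha> ((n - 1) div 2) else {})"
  proof -
  have a: "n \<noteq> 0" "n \<noteq> 1" using assms by auto
  show ?thesis by (subst Btree.simps) (simp only: Let_def if_not_P[OF a(1)] if_not_P[OF a(2)])
qed

lemma N_less:
  assumes "0 < \<alpha>" "1 \<le> n"
  shows "nat \<lfloor>(1 - \<alpha>) * real n\<rfloor> < n"
proof -
  have "(1 - \<alpha>) * real n < real n" using assms by (simp add: algebra_simps)
  then have "\<lfloor>(1 - \<alpha>) * real n\<rfloor> < int n" by linarith
  then show ?thesis using zless_nat_conj[of _ "int n"] assms by auto
qed

lemma F_less: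
  assumes "\<alpha> < 1" "1 \<le> n"
  shows "nat \<lfloor>\<alpha> * real n\<rfloor> < n"
proof -
  have "\<alpha> * real n < real n" using assms by simp
  then have "\<lfloor>\<alpha> * real n\<rfloor> < int n" by linarith
  then show ?thesis using zless_nat_conj[of _ "int n"] assms by auto
qed

lemma Bfacts:
  assumes n: "2 \<le> n" and a: "0 < \<alpha>" "\<alpha> < 1"
  defines "as \<equiv> aseq (nat \<lfloor>(1 - \<alpha>) * real n\<rfloor>)"
  shows B_spine: "\<And>i. i \<le> length as \<Longrightarrow> replicate i 0 \<in> Btree \<alpha> n"
    and B_hang: "\<And>i. i < length as \<Longrightarrow> Btree \<alpha> (as ! i - 1) \<subseteq> sub (Btree \<alpha> n) (replicate i 0 @ [1])"
    and B_big: "Btree \<alpha> (nat \<lfloor>\<alpha> * real n\<rfloor>) \<subseteq> sub (Btree \<alpha> n) (replicate (length as) 0 @ [1])"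
    and B_small: "Btree \<alpha> ((n - 1) div 2) \<subseteq> sub (Btree \<alpha> n) (replicate (length as) 0 @ [2])"
proof -
  note U = Btree_unfold[OF n, of \<alpha>, folded as_def]
  show "replicate i 0 \<in> Btree \<alpha> n" if "i \<le> length as" for i
    unfolding U by (rule UnI1, rule UnI1, rule UnI1) (use that in blast)
  show "Btree \<alpha> (as ! i - 1) \<subseteq> sub (Btree \<alpha> n) (replicate i 0 @ [1])" if i: "i < length as" for i
  proof -
    have "as ! i \<in> set as" using i by simp
    then have "as ! i \<le> nat \<lfloor>(1 - \<alpha>) * real n\<rfloor>" using aseq_set as_def by blast
    then have lt: "as ! i - 1 < n" using N_less[OF a(1), of n] n by linarith
    show ?thesis
    proof
      fix q assume q: "q \<in> Btree \<alpha> (as ! i - 1)"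
      have "replicate i 0 @ 1 # q \<in> Btree \<alpha> n"
        unfolding U apply (rule UnI1, rule UnI1, rule UnI2)
        apply (rule UN_I[of i])
        using i apply simp
        apply (rule image_eqI[OF refl])
        using q lt by simp
      then show "q \<in> sub (Btree \<alpha> n) (replicate i 0 @ [1])" by (simp add: sub_def)
    qed
  qed
  show "Btree \<alpha> (nat \<lfloor>\<alpha> * real n\<rfloor>) \<subseteq> sub (Btree \<alpha> n) (replicate (length as) 0 @ [1])"
  proof
    fix q assume q: "q \<in> Btree \<alpha> (nat \<lfloor>\<alpha> * real n\<rfloor>)"
    have lt: "nat \<lfloor>\<alpha> * real n\<rfloor> < n" using F_less[OF a(2), of n] n by simp
    have "replicate (length as) 0 @ 1 # q \<in> Btree \<alpha> n"
      unfolding U by (rule UnI1, rule UnI2) (use q lt in simp)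
    then show "q \<in> sub (Btree \<alpha> n) (replicate (length as) 0 @ [1])" by (simp add: sub_def)
  qed
  show "Btree \<alpha> ((n - 1) div 2) \<subseteq> sub (Btree \<alpha> n) (replicate (length as) 0 @ [2])"
  proof
    fix q assume q: "q \<in> Btree \<alpha> ((n - 1) div 2)"
    have lt: "(n - 1) div 2 < n" using n by simp
    have "replicate (length as) 0 @ 2 # q \<in> Btree \<alpha> n"
      unfolding U by (rule UnI2) (use q lt in simp)
    then show "q \<in> sub (Btree \<alpha> n) (replicate (length as) 0 @ [2])" by (simp add: sub_def)
  qed
qed

lemma rep_app: "replicate i (0::nat) @ replicate j 0 @ xs = replicate (i + j) 0 @ xs"
  by (simp add: replicate_add)

lemma Btree_one: "Btree \<alpha> 1 = {[]}"
  by (subst Btree.simps) (simp del: Btree.simps)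

lemma main:
  assumes a: "0 < \<alpha>" "\<alpha> < 1"
  shows "is_binary_tree T \<Longrightarrow> card T \<le> n \<Longrightarrow> embeds T (Btree \<alpha> n)"
proof (induction n arbitrary: T rule: less_induct)
  case (less n T0)
  note OIH = less.IH
  have fT0: "finite T0" using less.prems unfolding is_binary_tree_def is_tree_def by auto
  show ?case
  proof (cases "T0 = {}")
    case True then show ?thesis by (simp add: embeds_empty)
  next
    case ne: False
    then have "card T0 \<noteq> 0" using fT0 by simp
    then have n1: "1 \<le> n" using less.prems by linarith
    show ?thesis
    proof (cases "n = 1")
      case True
      obtain x where "x \<in> T0" using ne by blast
      then have root: "[] \<in> T0"
        using tree_prefix[of T0 "[]" x] less.prems unfolding is_binary_tree_def by simp
      have "card T0 = 1" using less.prems True \<open>card T0 \<noteq> 0\<close> by linarith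
      then have "T0 = {[]}" using root by (metis card_1_singletonE singletonD)
      moreover have "emb {[]} {[]} id" unfolding emb_def by (simp add: nca_same)
      ultimately show ?thesis using True Btree_one unfolding embeds_def by auto
    next
      case False
      then have n2: "2 \<le> n" using n1 by simp
      define N where "N = nat \<lfloor>(1 - \<alpha>) * real n\<rfloor>"
      define as where "as = aseq N"
      define k where "k = length as"
      define F where "F = nat \<lfloor>\<alpha> * real n\<rfloor>"
      define B where "B = Btree \<alpha> n"
      have Bsp: "\<And>i. i \<le> k \<Longrightarrow> replicate i 0 \<in> B"
        using B_spine[OF n2 a] unfolding k_def as_def N_def B_def by blast
      have Bhang: "\<And>i. i < k \<Longrightarrow> Btree \<alpha> (as ! i - 1) \<subseteq> sub B (replicate i 0 @ [1])"
        using B_hang[OF n2 a] unfolding k_def as_def N_def B_def by blast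
      have Bbig: "Btree \<alpha> F \<subseteq> sub B (replicate k 0 @ [1])"
        using B_big[OF n2 a] unfolding k_def as_def N_def B_def F_def by blast
      have Bsmall: "Btree \<alpha> ((n - 1) div 2) \<subseteq> sub B (replicate k 0 @ [2])"
        using B_small[OF n2 a] unfolding k_def as_def N_def B_def by blast
      have FN: "F < n" using F_less[OF a(2) n1] unfolding F_def .
      have NN: "N < n" using N_less[OF a(1) n1] unfolding N_def .
      have asN: "\<And>j. j < k \<Longrightarrow> 1 \<le> as ! j \<and> as ! j \<le> N"
        using aseq_set unfolding k_def as_def by (metis nth_mem)
      have D: "embeds T' (sub B (replicate i 0))"
        if "is_binary_tree T'" "card T' \<le> n" "i \<le> k" "fits (drop i as) s" "card T' \<le> s + F + 1"
        for T' i s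
        using that
      proof (induction "card T'" arbitrary: T' i s rule: less_induct)
        case less
        show ?case
        proof (cases "T' = {}")
          case True then show ?thesis by (simp add: embeds_empty)
        next
          case False
          obtain c1 c2 where c: "c1 \<noteq> c2" "[] \<in> T'" "\<forall>c q. c # q \<in> T' \<longrightarrow> c = c1 \<or> c = c2"
            and cardT: "card T' = Suc (card (sub T' [c1]) + card (sub T' [c2]))"
            and heavy: "card (sub T' [c2]) \<le> card (sub T' [c1])"
            using decomp[OF less.prems(1) False] by blast
          have bt1: "is_binary_tree (sub T' [c1])" and bt2: "is_binary_tree (sub T' [c2])"
            using sub_binary less.prems(1) by auto
          define S where "S = sub B (replicate i 0)"
          show ?thesis
          proof (cases "card (sub T' [c1]) \<le> F")
            case True
            have e1: "embeds (sub T' [c1]) (Btree \<alpha> F)" using OIH[OF FN bt1 True] .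
            have "card (sub T' [c2]) \<le> (n - 1) div 2" using cardT heavy less.prems(2) by linarith
            then have e2: "embeds (sub T' [c2]) (Btree \<alpha> ((n - 1) div 2))"
              using OIH[OF _ bt2] n2 by simp
            have kk: "i + (k - i) = k" using less.prems(3) by simp
            have r: "replicate (k - i) 0 \<in> S"
              using Bsp[of k] kk unfolding S_def sub_def by (simp add: replicate_add[symmetric])
            have s1: "sub S (replicate (k - i) 0 @ [1]) = sub B (replicate k 0 @ [1])"
              unfolding S_def sub_sub rep_app kk ..
            have s2: "sub S (replicate (k - i) 0 @ [2]) = sub B (replicate k 0 @ [2])"
              unfolding S_def sub_sub rep_app kk ..
            show ?thesis unfolding S_def[symmetric]
              apply (rule embeds_glue[OF c(2) c(1) _ _ r, of 1 2])
              using c(3) apply blast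
                apply simp
              using e1 Bbig s1 embeds_mono apply metis
              using e2 Bsmall s2 embeds_mono by metis
          next
            case False
            define b where "b = Suc (card (sub T' [c2]))"
            have b: "1 \<le> b" "b \<le> s" using False cardT less.prems(5) unfolding b_def by linarith+
            obtain j where j: "j < length (drop i as)" "b \<le> drop i as ! j"
              "fits (drop (Suc j) (drop i as)) (s - b)"
              using less.prems(4) b by (cases rule: fits.cases) blast
            define i' where "i' = i + j"
            have i'k: "i' < k" using j(1) unfolding i'_def k_def by simp
            have bi: "b \<le> as ! i'" using j(2) less.prems(3) unfolding i'_def k_def by simp
            have fi: "fits (drop (Suc i') as) (s - b)" using j(3) unfolding i'_def by (simp add: add.commute)
            have e1: "embeds (sub T' [c1]) (sub B (replicate (Suc i') 0))"
              apply (rule less.hyps[OF _ bt1 _ _ fi])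
              using cardT less.prems(2) i'k b_def less.prems(5) by auto
            have lt: "as ! i' - 1 < n" using asN[OF i'k] NN by linarith
            have "card (sub T' [c2]) \<le> as ! i' - 1" using bi unfolding b_def by linarith
            then have e2: "embeds (sub T' [c2]) (Btree \<alpha> (as ! i' - 1))" using OIH[OF lt bt2] by simp
            have r: "replicate j 0 \<in> S"
              using Bsp[of i'] i'k unfolding S_def sub_def i'_def by (simp add: replicate_add[symmetric])
            have s1: "sub S (replicate j 0 @ [0]) = sub B (replicate (Suc i') 0)"
              unfolding S_def sub_sub rep_app i'_def by (simp add: replicate_append_same)
            have s2: "sub S (replicate j 0 @ [1]) = sub B (replicate i' 0 @ [1])"
              unfolding S_def sub_sub rep_app i'_def ..
            show ?thesis unfolding S_def[symmetric]
              apply (rule embeds_glue[OF c(2) c(1) _ _ r, of 0 1])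
              using c(3) apply blast
                apply simp
              using e1 s1 apply simp
              using e2 Bhang[OF i'k] s2 embeds_mono by metis
          qed
        qed
      qed
      have "real N > (1 - \<alpha>) * real n - 1" "real F > \<alpha> * real n - 1"
        unfolding N_def F_def using a by (simp_all add: algebra_simps) linarith+
      then have "real N + real F > real n - 2" by (simp add: algebra_simps)
      then have "n \<le> N + F + 1" by linarith
      then have "embeds T0 (sub B (replicate 0 0))"
        using D[OF less.prems(1,2), of 0 N] aseq_fits less.prems(2) unfolding as_def by simp
      then show ?thesis unfolding B_def by (simp add: sub_Nil)
    qed
  qed
qed

theorem lemma2:
  fixes \<alpha> :: real and n :: nat and T :: "nat list set"
  assumes "1/2 < \<alpha>" and "\<alpha> < 1"
    and "is_binary_tree T" and "card T = n"
  shows "\<exists>f. inj_on f T \<and> f ` T \<subseteq> Btree \<alpha> n \<and>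
             (\<forall>u\<in>T. \<forall>v\<in>T. f (nca u v) = nca (f u) (f v))"
proof -
  have "0 < \<alpha>" using assms(1) by simp
  then have "embeds T (Btree \<alpha> n)" using main[OF _ assms(2) assms(3)] assms(4) by simp
  then show ?thesis unfolding embeds_def emb_def by blast
qed

end
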